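(* Let $G$ be a group of order $9$ acting on $\mathbb P^1\times\mathbb P^1\times\mathbb P^1$ (over $\mathbb C$) such that the action is free outside a finite subset. If $G$ permutes the three factors of $\mathbb P^1\times\mathbb P^1\times\mathbb P^1$ nontrivially, then $G\cong\mathbb Z_9$ and there are affine coordinates $x,y,z$ on the three copies of $\mathbb P^1$ such that a generator $g$ of $G$ acts by $g\colon(x,y,z)\mapsto(y,z,\omega x)$, where $\omega$ is a primitive cube root of $1$.
   Context: The action is by automorphisms; "free outside a finite subset" means that the set of points with nontrivial stabilizer is finite. Any automorphism of $\mathbb P^1\times\mathbb P^1\times\mathbb P^1$ permutes the three projections, giving a homomorphism to the symmetric group $S_3$; "permutes the factors nontrivially" means this homomorphism is nontrivial on $G$. *)

theory Defs
  imports Complex_Main "HOL-Algebra.Algebra"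
begin

datatype P1 = Fin complex | Inf

fun mob :: "complex \<Rightarrow> complex \<Rightarrow> complex \<Rightarrow> complex \<Rightarrow> P1 \<Rightarrow> P1" where
  "mob a b c d (Fin z) = (if c * z + d = 0 then Inf else Fin ((a * z + b) / (c * z + d)))"
| "mob a b c d Inf = (if c = 0 then Inf else Fin (a / c))"

definition is_mobius :: "(P1 \<Rightarrow> P1) \<Rightarrow> bool" where
  "is_mobius f \<longleftrightarrow> (\<exists>a b c d. a * d - b * c \<noteq> 0 \<and> f = mob a b c d)"

type_synonym P1cube = "P1 \<times> P1 \<times> P1"

definition coord :: "P1cube \<Rightarrow> nat \<Rightarrow> P1" where
  "coord p i = (if i = 0 then fst p else if i = 1 then fst (snd p) else snd (snd p))"

definition aut_with_perm :: "(P1cube \<Rightarrow> P1cube) \<Rightarrow> (nat \<Rightarrow> nat) \<Rightarrow> bool" where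
  "aut_with_perm F \<sigma> \<longleftrightarrow> \<sigma> permutes {0, 1, 2} \<and>
     (\<exists>m0 m1 m2. is_mobius m0 \<and> is_mobius m1 \<and> is_mobius m2 \<and>
        (\<forall>p. F p = (m0 (coord p (\<sigma> 0)), m1 (coord p (\<sigma> 1)), m2 (coord p (\<sigma> 2)))))"

definition is_aut :: "(P1cube \<Rightarrow> P1cube) \<Rightarrow> bool" where
  "is_aut F \<longleftrightarrow> (\<exists>\<sigma>. aut_with_perm F \<sigma>)"

definition aut_action :: "('g, 'b) monoid_scheme \<Rightarrow> ('g \<Rightarrow> P1cube \<Rightarrow> P1cube) \<Rightarrow> bool" where
  "aut_action G \<phi> \<longleftrightarrow> (\<forall>g\<in>carrier G. is_aut (\<phi> g)) \<and> \<phi> \<one>\<^bsub>G\<^esub> = id \<and>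
     (\<forall>g\<in>carrier G. \<forall>h\<in>carrier G. \<phi> (g \<otimes>\<^bsub>G\<^esub> h) = \<phi> g \<circ> \<phi> h)"

definition free_outside_finite :: "('g, 'b) monoid_scheme \<Rightarrow> ('g \<Rightarrow> P1cube \<Rightarrow> P1cube) \<Rightarrow> bool" where
  "free_outside_finite G \<phi> \<longleftrightarrow>
     finite {p. \<exists>g\<in>carrier G. g \<noteq> \<one>\<^bsub>G\<^esub> \<and> \<phi> g p = p}"

definition permutes_factors_nontrivially :: "('g, 'b) monoid_scheme \<Rightarrow> ('g \<Rightarrow> P1cube \<Rightarrow> P1cube) \<Rightarrow> bool" where
  "permutes_factors_nontrivially G \<phi> \<longleftrightarrow>
     (\<exists>g\<in>carrier G. \<exists>\<sigma>. aut_with_perm (\<phi> g) \<sigma> \<and> \<sigma> \<noteq> id)"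

definition model_map :: "complex \<Rightarrow> P1cube \<Rightarrow> P1cube" where
  "model_map \<omega> p = (case p of (x, y, z) \<Rightarrow> (y, z, mob \<omega> 0 0 1 x))"

end

theory Submission
  imports Defs
begin

lemma mob_comp:
  assumes h1: "a * d - b * c \<noteq> 0" and h2: "a' * d' - b' * c' \<noteq> 0"
  shows "mob a b c d (mob a' b' c' d' p) =
         mob (a * a'+b * c') (a * b'+b * d') (c * a'+d * c') (c * b'+d * d') p"
proof (cases p)
  case Inf
  show ?thesis
  proof (cases "c' = 0")
    case True
    then have "a' \<noteq> 0" using h2 by auto
    then show ?thesis using Inf True by auto
  next
    case False
    have e: "c * a' / c' + d = (c * a' + d * c') / c'" using False by (simp add: field_simps)
    have e2: "a * a' / c' + b = (a * a' + b * c') / c'" using False by (simp add: field_simps)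
    show ?thesis using Inf False by (auto simp: e e2)
  qed
next
  case (Fin z)
  show ?thesis
  proof (cases "c' * z + d' = 0")
    case True
    have id1: "a' * d' - b' * c' = a' * (c' * z + d') - c' * (a' * z + b')"
      by (simp add: algebra_simps)
    have nz: "a' * z + b' \<noteq> 0" using h2 True id1 by auto
    have den: "(c * a'+d * c') * z + (c * b'+d * d') = c * (a' * z+b') + d * (c' * z + d')"
      by (simp add: algebra_simps)
    have num: "(a * a'+b * c') * z + (a * b'+b * d') = a * (a' * z+b') + b * (c' * z + d')"
      by (simp add: algebra_simps)
    show ?thesis using Fin True nz by (auto simp: den num)
  next
    case False
    have e: "c * (a' * z+b') / (c' * z+d') + d = ((c * a'+d * c') * z + (c * b'+d * d')) / (c' * z+d')"
      using False by (simp add: field_simps)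
    have e2: "a * (a' * z+b') / (c' * z+d') + b = ((a * a'+b * c') * z + (a * b'+b * d')) / (c' * z+d')"
      using False by (simp add: field_simps)
    show ?thesis using Fin False by (auto simp: e e2)
  qed
qed

lemma mob_scalar: assumes "k \<noteq> 0" shows "mob k 0 0 k = id"
proof
  fix p show "mob k 0 0 k p = id p" using assms by (cases p) auto
qed

lemma is_mobius_id: "is_mobius id"
  unfolding is_mobius_def by (rule exI[of _ 1], rule exI[of _ 0], rule exI[of _ 0], rule exI[of _ 1])
    (simp add: mob_scalar)

lemma is_mobius_comp:
  assumes "is_mobius f" "is_mobius g" shows "is_mobius (f \<circ> g)"
proof -
  obtain a b c d where f: "a * d - b * c \<noteq> 0" "f = mob a b c d" using assms(1) unfolding is_mobius_def by blast
  obtain a' b' c' d' where g: "a' * d' - b' * c' \<noteq> 0" "g = mob a' b' c' d'" using assms(2) unfolding is_mobius_def by blast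
  have det: "(a * a'+b * c') * (c * b'+d * d') - (a * b'+b * d') * (c * a'+d * c') = (a * d - b * c) * (a' * d' - b' * c')"
    by (simp add: algebra_simps)
  have "f \<circ> g = mob (a * a'+b * c') (a * b'+b * d') (c * a'+d * c') (c * b'+d * d')"
    using f g by (auto simp: fun_eq_iff mob_comp)
  moreover have "(a * a'+b * c') * (c * b'+d * d') - (a * b'+b * d') * (c * a'+d * c') \<noteq> 0"
    using f g by (simp add: det)
  ultimately show ?thesis unfolding is_mobius_def by blast
qed

lemma mobius_inv:
  assumes "is_mobius f"
  shows "\<exists>h. is_mobius h \<and> (\<forall>x. h (f x) = x) \<and> (\<forall>x. f (h x) = x)"
proof -
  obtain a b c d where f: "a * d - b * c \<noteq> 0" "f = mob a b c d" using assms(1) unfolding is_mobius_def by blast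
  have d2: "d * a - (- b) * (- c) \<noteq> 0" using f by (simp add: algebra_simps)
  have "\<forall>x. mob d (- b) (- c) a (f x) = x"
  proof
    fix x
    have "mob d (- b) (- c) a (f x) = mob (a * d - b * c) 0 0 (a * d - b * c) x"
      using f d2 by (simp add: mob_comp algebra_simps)
    then show "mob d (- b) (- c) a (f x) = x" using f by (simp add: mob_scalar)
  qed
  moreover have "\<forall>x. f (mob d (- b) (- c) a x) = x"
  proof
    fix x
    have "f (mob d (- b) (- c) a x) = mob (a * d - b * c) 0 0 (a * d - b * c) x"
      using f d2 by (simp add: mob_comp algebra_simps)
    then show "f (mob d (- b) (- c) a x) = x" using f by (simp add: mob_scalar)
  qed
  moreover have "is_mobius (mob d (- b) (- c) a)" unfolding is_mobius_def using d2 by blast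
  ultimately show ?thesis by blast
qed

lemma mobius_bij: assumes "is_mobius f" shows "bij f"
proof -
  obtain h where "\<forall>x. h (f x) = x" "\<forall>x. f (h x) = x" using mobius_inv[OF assms] by blast
  then show ?thesis by (intro o_bij[of h]) (auto simp: fun_eq_iff)
qed

lemma mobius_fixpoint:
  assumes "is_mobius T" shows "\<exists>p. T p = p"
proof -
  obtain a b c d where f: "a * d - b * c \<noteq> 0" "T = mob a b c d" using assms(1) unfolding is_mobius_def by blast
  show ?thesis
  proof (cases "c = 0")
    case True then show ?thesis using f by (intro exI[of _ Inf]) simp
  next
    case False
    define s where "s = csqrt ((d - a)^2 + 4 * b * c)"
    define z where "z = (a - d + s) / (2 * c)"
    have s2: "s^2 = (d - a)^2 + 4 * b * c" unfolding s_def by simp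
    have "4 * c * (c * z^2 + (d - a) * z - b) = s^2 - ((d - a)^2 + 4 * b * c)"
      unfolding z_def using False by (simp add: field_simps power2_eq_square)
    then have q: "c * z^2 + (d - a) * z - b = 0" using s2 False by simp
    have nz: "c * z + d \<noteq> 0"
    proof
      assume h: "c * z + d = 0"
      have "a * z + b = z * (c * z + d) - (c * z^2 + (d - a) * z - b)" by (simp add: algebra_simps power2_eq_square)
      then have h2: "a * z + b = 0" using h q by simp
      have "a * d - b * c = a * (c * z + d) - c * (a * z + b)" by (simp add: algebra_simps)
      then show False using h h2 f by simp
    qed
    have "z * (c * z + d) - (a * z + b) = c * z^2 + (d - a) * z - b"
      by (simp add: algebra_simps power2_eq_square)
    then have "a * z + b = z * (c * z + d)" using q by simp
    then have "(a * z + b) / (c * z + d) = z" using nz by simp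
    then show ?thesis using f nz by (intro exI[of _ "Fin z"]) simp
  qed
qed

lemma mobius_to_inf: "\<exists>\<nu>. is_mobius \<nu> \<and> \<nu> p = Inf"
proof (cases p)
  case (Fin z0)
  have "is_mobius (mob 0 1 1 (- z0))" unfolding is_mobius_def by (intro exI[of _ 0] exI[of _ 1] exI[of _ 1] exI[of _ "-z0"]) simp
  moreover have "mob 0 1 1 (- z0) p = Inf" using Fin by simp
  ultimately show ?thesis by blast
next
  case Inf
  then show ?thesis using is_mobius_id by force
qed

lemma order3_conj:
  assumes T: "is_mobius T" and nid: "T \<noteq> id" and T3: "\<And>x. T (T (T x)) = x"
  shows "\<exists>\<omega> \<mu>. \<omega> ^ 3 = 1 \<and> \<omega> \<noteq> 1 \<and> is_mobius \<mu> \<and> (\<forall>x. \<mu> (T x) = mob \<omega> 0 0 1 (\<mu> x))"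
proof -
  obtain p0 where p0: "T p0 = p0" using mobius_fixpoint[OF T] by blast
  obtain \<nu> where nu: "is_mobius \<nu>" "\<nu> p0 = Inf" using mobius_to_inf by blast
  obtain \<nu>' where nu': "is_mobius \<nu>'" "\<forall>x. \<nu>' (\<nu> x) = x" "\<forall>x. \<nu> (\<nu>' x) = x"
    using mobius_inv[OF nu(1)] by blast
  define S where "S = \<nu> \<circ> T \<circ> \<nu>'"
  have Smob: "is_mobius S" unfolding S_def using nu nu' T by (intro is_mobius_comp) auto
  have SInf: "S Inf = Inf" unfolding S_def using nu nu' p0 by (metis comp_apply)
  have S3: "S (S (S x)) = x" for x unfolding S_def using nu' T3 by simp
  have Snu: "\<nu> (T x) = S (\<nu> x)" for x unfolding S_def using nu' by simp
  have Snid: "\<exists>x. S x \<noteq> x"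
  proof (rule ccontr)
    assume "\<not> (\<exists>x. S x \<noteq> x)"
    then have "\<forall>x. S x = x" by blast
    then have "T y = y" for y using Snu nu' by metis
    then show False using nid by (auto simp: fun_eq_iff)
  qed
  obtain a b c d where S: "a * d - b * c \<noteq> 0" "S = mob a b c d" using Smob unfolding is_mobius_def by blast
  have c0: "c = 0" using SInf S by (auto split: if_splits)
  then have d0: "d \<noteq> 0" using S by auto
  define \<alpha> where "\<alpha> = a / d"
  define \<beta> where "\<beta> = b / d"
  have SF: "S (Fin z) = Fin (\<alpha> * z + \<beta>)" for z
    using S c0 d0 unfolding \<alpha>_def \<beta>_def by (simp add: field_simps)
  have cub: "\<alpha> * (\<alpha> * (\<alpha> * z + \<beta>) + \<beta>) + \<beta> = z" for z
    using S3[of "Fin z"] by (simp add: SF)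
  have e0: "(\<alpha>^2 + \<alpha> + 1) * \<beta> = 0" using cub[of 0] by (simp add: algebra_simps power2_eq_square)
  have "\<alpha>^3 + (\<alpha>^2 + \<alpha> + 1) * \<beta> = 1" using cub[of 1] by (simp add: algebra_simps power2_eq_square power3_eq_cube)
  then have e1: "\<alpha>^3 = 1" using e0 by simp
  have a1: "\<alpha> \<noteq> 1"
  proof
    assume "\<alpha> = 1"
    then have "\<beta> = 0" using e0 by simp
    then have "S x = x" for x using SInf \<open>\<alpha> = 1\<close> by (cases x) (auto simp: SF)
    then show False using Snid by blast
  qed
  define \<gamma> where "\<gamma> = \<beta> / (\<alpha> - 1)"
  have g: "\<beta> + \<gamma> = \<alpha> * \<gamma>" unfolding \<gamma>_def using a1 by (simp add: field_simps)
  define \<rho> where "\<rho> = mob 1 \<gamma> 0 1"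
  have rmob: "is_mobius \<rho>" unfolding is_mobius_def \<rho>_def by (intro exI[of _ 1] exI[of _ \<gamma>] exI[of _ 0] exI[of _ 1]) simp
  have rS: "\<rho> (S q) = mob \<alpha> 0 0 1 (\<rho> q)" for q
  proof (cases q)
    case (Fin z)
    have "\<alpha> * z + \<beta> + \<gamma> = \<alpha> * (z + \<gamma>)" using g by (simp add: algebra_simps)
    then show ?thesis using Fin by (simp add: SF \<rho>_def add.commute)
  next
    case Inf then show ?thesis using SInf by (simp add: \<rho>_def)
  qed
  have "\<forall>x. (\<rho> \<circ> \<nu>) (T x) = mob \<alpha> 0 0 1 ((\<rho> \<circ> \<nu>) x)" by (simp add: Snu rS)
  moreover have "is_mobius (\<rho> \<circ> \<nu>)" using rmob nu by (intro is_mobius_comp)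
  ultimately show ?thesis using e1 a1 by blast
qed

definition shp :: "(P1cube \<Rightarrow> P1cube) \<Rightarrow> (nat \<Rightarrow> nat) \<Rightarrow> bool" where
  "shp F \<sigma> \<longleftrightarrow> (\<forall>i\<in>{0,1,2}. \<sigma> i \<in> {0,1,2}) \<and>
     (\<exists>M. \<forall>p. \<forall>i\<in>{0,1,2}. coord (F p) i = M i (coord p (\<sigma> i)))"

lemma shp_comp:
  assumes "shp F \<sigma>" "shp F' \<tau>" shows "shp (F \<circ> F') (\<tau> \<circ> \<sigma>)"
proof -
  obtain M where M: "\<forall>p. \<forall>i\<in>{0,1,2}. coord (F p) i = M i (coord p (\<sigma> i))" and s: "\<forall>i\<in>{0,1,2}. \<sigma> i \<in> {0,1,2}"
    using assms(1) unfolding shp_def by blast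
  obtain M' where M': "\<forall>p. \<forall>i\<in>{0,1,2}. coord (F' p) i = M' i (coord p (\<tau> i))" and t: "\<forall>i\<in>{0,1,2}. \<tau> i \<in> {0,1,2}"
    using assms(2) unfolding shp_def by blast
  have A: "\<forall>p. \<forall>i\<in>{0,1,2}. coord ((F \<circ> F') p) i = (\<lambda>i. M i \<circ> M' (\<sigma> i)) i (coord p ((\<tau> \<circ> \<sigma>) i))"
  proof (intro allI ballI)
    fix p i assume i: "i \<in> {0::nat,1,2}"
    have si: "\<sigma> i \<in> {0,1,2}" using bspec[OF s i] .
    have "coord (F (F' p)) i = M i (coord (F' p) (\<sigma> i))" using M i by blast
    also have "coord (F' p) (\<sigma> i) = M' (\<sigma> i) (coord p (\<tau> (\<sigma> i)))" using M' si by blast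
    finally show "coord ((F \<circ> F') p) i = (\<lambda>i. M i \<circ> M' (\<sigma> i)) i (coord p ((\<tau> \<circ> \<sigma>) i))" by simp
  qed
  have B: "\<forall>i\<in>{0,1,2}. (\<tau> \<circ> \<sigma>) i \<in> {0,1,2}" using s t by (metis comp_apply)
  show ?thesis unfolding shp_def
    apply (rule conjI, rule B)
    apply (rule exI[where x="\<lambda>i. M i \<circ> M' (\<sigma> i)"])
    by (rule A)
qed

lemma shp_id: "shp id id"
  unfolding shp_def by (intro conjI exI[of _ "\<lambda>i. id"]) auto

lemma shp_pow: assumes "shp F \<sigma>" shows "shp (F ^^ n) (\<sigma> ^^ n)"
proof (induction n)
  case 0 show ?case unfolding funpow.simps(1) by (rule shp_id)
next
  case (Suc n)
  have "shp (F ^^ n \<circ> F) (\<sigma> \<circ> \<sigma> ^^ n)" using shp_comp[OF Suc assms] .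
  then show ?case by (simp only: funpow_Suc_right[where f=F] funpow.simps(2)[where f=\<sigma>])
qed


definition pt :: "nat \<Rightarrow> P1 \<Rightarrow> P1cube" where
  "pt i a = (if i = 0 then a else Inf, if i = 1 then a else Inf, if i = 2 then a else Inf)"

lemma coord_pt: "j \<in> {0,1,2} \<Longrightarrow> coord (pt i a) j = (if j = i then a else Inf)"
  by (auto simp: pt_def coord_def)

lemma shp_nonid:
  assumes "shp F \<sigma>" "i \<in> {0,1,2}" "\<sigma> i \<noteq> i" shows "F \<noteq> id"
proof
  assume F: "F = id"
  obtain M where M: "\<forall>p. \<forall>i\<in>{0,1,2}. coord (F p) i = M i (coord p (\<sigma> i))" and s: "\<forall>i\<in>{0,1,2}. \<sigma> i \<in> {0,1,2}"
    using assms(1) unfolding shp_def by blast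
  have si: "\<sigma> i \<in> {0,1,2}" using bspec[OF s assms(2)] .
  have "coord (F (pt i a)) i = M i (coord (pt i a) (\<sigma> i))" for a using M assms(2) by blast
  then have "coord (pt i a) i = M i (coord (pt i a) (\<sigma> i))" for a using F by simp
  moreover have "coord (pt i a) i = a" for a using coord_pt[OF assms(2)] by simp
  moreover have "coord (pt i a) (\<sigma> i) = Inf" for a using coord_pt[OF si] assms(3) by simp
  ultimately have "a = M i Inf" for a by metis
  then have "Inf = M i Inf" "Fin 0 = M i Inf" by blast+
  then have "Inf = Fin 0" by simp
  then show False by simp
qed

lemma shp_of_aut: assumes "aut_with_perm F \<sigma>" shows "shp F \<sigma>"
proof -
  have p: "\<sigma> permutes {0,1,2}" using assms unfolding aut_with_perm_def by blast
  obtain m0 m1 m2 where m: "\<forall>p. F p = (m0 (coord p (\<sigma> 0)), m1 (coord p (\<sigma> 1)), m2 (coord p (\<sigma> 2)))"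
    using assms unfolding aut_with_perm_def by blast
  have A: "\<forall>p. \<forall>i\<in>{0,1,2}. coord (F p) i = (\<lambda>i. if i = 0 then m0 else if i = 1 then m1 else m2) i (coord p (\<sigma> i))"
  proof (intro allI ballI)
    fix p i assume "i \<in> {0::nat,1,2}"
    then have "i = 0 \<or> i = 1 \<or> i = 2" by blast
    then show "coord (F p) i = (\<lambda>i. if i = 0 then m0 else if i = 1 then m1 else m2) i (coord p (\<sigma> i))"
      by (elim disjE) (simp_all add: m coord_def)
  qed
  have B: "\<forall>i\<in>{0,1,2}. \<sigma> i \<in> {0,1,2}" by (intro ballI) (simp only: permutes_in_image[OF p])
  show ?thesis unfolding shp_def
    apply (rule conjI, rule B)
    apply (rule exI[where x="\<lambda>i. if i = 0 then m0 else if i = 1 then m1 else m2"])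
    by (rule A)
qed


lemma bij_triple:
  fixes f g h :: "P1 \<Rightarrow> P1"
  assumes "bij f" "bij g" "bij h"
  shows "bij (\<lambda>p. (f (fst p), g (fst (snd p)), h (snd (snd p))))"
proof -
  have i: "inj f" "inj g" "inj h" using assms by (simp_all add: bij_is_inj)
  have "inj (\<lambda>p. (f (fst p), g (fst (snd p)), h (snd (snd p))))"
  proof (rule injI)
    fix p q :: P1cube
    assume "(f (fst p), g (fst (snd p)), h (snd (snd p))) = (f (fst q), g (fst (snd q)), h (snd (snd q)))"
    then have "f (fst p) = f (fst q)" "g (fst (snd p)) = g (fst (snd q))" "h (snd (snd p)) = h (snd (snd q))" by simp_all
    then have "fst p = fst q" "fst (snd p) = fst (snd q)" "snd (snd p) = snd (snd q)"
      using i by (simp_all add: inj_eq)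
    then show "p = q" by (simp add: prod_eq_iff)
  qed
  moreover have "surj (\<lambda>p. (f (fst p), g (fst (snd p)), h (snd (snd p))))"
  proof -
    { fix q :: P1cube
      have "q = (\<lambda>p. (f (fst p), g (fst (snd p)), h (snd (snd p)))) (inv_into UNIV f (fst q), inv_into UNIV g (fst (snd q)), inv_into UNIV h (snd (snd q)))"
        using assms by (simp add: bij_is_surj surj_f_inv_f)
      then have "q \<in> range (\<lambda>p. (f (fst p), g (fst (snd p)), h (snd (snd p))))" by blast }
    then show ?thesis by blast
  qed
  ultimately show ?thesis by (simp add: bij_def)
qed

lemma infinite_P1: "infinite (UNIV :: P1 set)"
proof
  assume "finite (UNIV :: P1 set)"
  then have "finite (range Fin)" by (rule finite_subset[rotated]) auto
  moreover have "inj Fin" by (auto simp: inj_def)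
  ultimately have "finite (UNIV :: complex set)" using finite_imageD by blast
  then show False using infinite_UNIV_char_0 by blast
qed

lemma infinite_fix:
  fixes F :: "P1cube \<Rightarrow> P1cube" and f :: "P1 \<Rightarrow> P1cube"
  assumes "\<And>x. F (f x) = f x" "inj f" shows "infinite {p. F p = p}"
proof
  assume "finite {p. F p = p}"
  moreover have "range f \<subseteq> {p. F p = p}" using assms(1) by (simp add: image_subset_iff)
  ultimately have "finite (range f)" by (rule finite_subset[rotated])
  then have "finite (UNIV :: P1 set)" using assms(2) by (rule finite_imageD)
  with infinite_P1 show False by simp
qed

lemma cycleA:
  assumes m: "is_mobius m0" "is_mobius m1" "is_mobius m2"
    and F: "\<And>x y z. F (x, y, z) = (m0 y, m1 z, m2 x)"
    and fin: "finite {p. F p = p}"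
    and F9: "F ^^ 9 = id"
  shows "F ^^ 3 \<noteq> id \<and> (\<exists>\<omega> H. \<omega> ^ 3 = 1 \<and> \<omega> \<noteq> 1 \<and> is_aut H \<and> bij H \<and>
           (\<forall>p. H (F p) = model_map \<omega> (H p)))"
proof -
  define T where "T = m0 \<circ> m1 \<circ> m2"
  have Tm: "is_mobius T" unfolding T_def using m by (intro is_mobius_comp)
  have F3: "(F ^^ 3) (x, y, z) = (T x, m1 (m2 (m0 y)), m2 (m0 (m1 z)))" for x y z
    by (simp add: numeral_3_eq_3 F T_def)
  have "F ^^ 9 = (F ^^ 3) ^^ 3" by (simp add: funpow_mult)
  then have "((F ^^ 3) ^^ 3) (x, y, z) = (x, y, z)" for x y z using F9 by simp
  note prev = this
  have c3: "G ^^ 3 = G \<circ> G \<circ> G" for G :: "P1cube \<Rightarrow> P1cube" by (simp add: numeral_3_eq_3 fun_eq_iff)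
  have "(F ^^ 3) ((F ^^ 3) ((F ^^ 3) (x, y, z))) = (x, y, z)" for x y z
    using prev[of x y z] unfolding c3[of "F ^^ 3"] by (simp only: comp_apply)
  then have T3: "T (T (T x)) = x" for x using F3 by (metis prod.inject)
  have Tnid: "T \<noteq> id"
  proof
    assume "T = id"
    then have "F (x, m1 (m2 x), m2 x) = (x, m1 (m2 x), m2 x)" for x
      by (simp add: F T_def fun_eq_iff)
    moreover have "inj (\<lambda>x. (x, m1 (m2 x), m2 x))" by (auto simp: inj_def)
    ultimately show False using infinite_fix[of F "\<lambda>x. (x, m1 (m2 x), m2 x)"] fin by blast
  qed
  have F3nid: "F ^^ 3 \<noteq> id"
  proof
    assume "F ^^ 3 = id"
    then have "T x = x" for x using F3[of x Inf Inf] by simp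
    then show False using Tnid by (auto simp: fun_eq_iff)
  qed
  obtain \<omega> \<mu> where om: "\<omega> ^ 3 = 1" "\<omega> \<noteq> 1" and mu: "is_mobius \<mu>" and conj: "\<forall>x. \<mu> (T x) = mob \<omega> 0 0 1 (\<mu> x)"
    using order3_conj[OF Tm Tnid T3] by blast
  define H where "H = (\<lambda>p. (\<mu> (fst p), (\<mu> \<circ> m0) (fst (snd p)), (\<mu> \<circ> m0 \<circ> m1) (snd (snd p))))"
  have mm: "is_mobius (\<mu> \<circ> m0)" "is_mobius (\<mu> \<circ> m0 \<circ> m1)" using mu m by (auto intro!: is_mobius_comp)
  have bijH: "bij H" unfolding H_def using mu mm by (intro bij_triple mobius_bij)
  have autH: "is_aut H"
  proof -
    have A: "\<forall>p. H p = (\<mu> (coord p (id 0)), (\<mu> \<circ> m0) (coord p (id 1)), (\<mu> \<circ> m0 \<circ> m1) (coord p (id 2)))"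
      by (simp add: H_def coord_def)
    have "aut_with_perm H id" unfolding aut_with_perm_def
      apply (rule conjI, rule permutes_id)
      apply (rule exI[of _ \<mu>], rule exI[of _ "\<mu> \<circ> m0"], rule exI[of _ "\<mu> \<circ> m0 \<circ> m1"])
      by (intro conjI mu mm A)
    then show ?thesis unfolding is_aut_def by blast
  qed
  have eqH: "\<forall>p. H (F p) = model_map \<omega> (H p)"
  proof
    fix p :: P1cube
    obtain x y z where p: "p = (x, y, z)" by (cases p) auto
    have "\<mu> (m0 (m1 (m2 x))) = mob \<omega> 0 0 1 (\<mu> x)" using conj by (simp add: T_def)
    then show "H (F p) = model_map \<omega> (H p)" by (simp add: p F H_def model_map_def)
  qed
  show ?thesis
    apply (rule conjI[OF F3nid])
    apply (rule exI[of _ \<omega>], rule exI[of _ H])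
    by (intro conjI om autH bijH eqH)
qed

lemma cycleB:
  assumes m: "is_mobius m0" "is_mobius m1" "is_mobius m2"
    and F: "\<And>x y z. F (x, y, z) = (m0 z, m1 x, m2 y)"
    and fin: "finite {p. F p = p}"
    and F9: "F ^^ 9 = id"
  shows "F ^^ 3 \<noteq> id \<and> (\<exists>\<omega> H. \<omega> ^ 3 = 1 \<and> \<omega> \<noteq> 1 \<and> is_aut H \<and> bij H \<and>
           (\<forall>p. H (F p) = model_map \<omega> (H p)))"
proof -
  define T where "T = m0 \<circ> m2 \<circ> m1"
  have Tm: "is_mobius T" unfolding T_def using m by (intro is_mobius_comp)
  have F3: "(F ^^ 3) (x, y, z) = (T x, m1 (m0 (m2 y)), m2 (m1 (m0 z)))" for x y z
    by (simp add: numeral_3_eq_3 F T_def)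
  have "F ^^ 9 = (F ^^ 3) ^^ 3" by (simp add: funpow_mult)
  then have "((F ^^ 3) ^^ 3) (x, y, z) = (x, y, z)" for x y z using F9 by simp
  note prev = this
  have c3: "G ^^ 3 = G \<circ> G \<circ> G" for G :: "P1cube \<Rightarrow> P1cube" by (simp add: numeral_3_eq_3 fun_eq_iff)
  have "(F ^^ 3) ((F ^^ 3) ((F ^^ 3) (x, y, z))) = (x, y, z)" for x y z
    using prev[of x y z] unfolding c3[of "F ^^ 3"] by (simp only: comp_apply)
  then have T3: "T (T (T x)) = x" for x using F3 by (metis prod.inject)
  have Tnid: "T \<noteq> id"
  proof
    assume "T = id"
    then have "F (x, m1 x, m2 (m1 x)) = (x, m1 x, m2 (m1 x))" for x
      by (simp add: F T_def fun_eq_iff)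
    moreover have "inj (\<lambda>x. (x, m1 x, m2 (m1 x)))" by (auto simp: inj_def)
    ultimately show False using infinite_fix[of F "\<lambda>x. (x, m1 x, m2 (m1 x))"] fin by blast
  qed
  have F3nid: "F ^^ 3 \<noteq> id"
  proof
    assume "F ^^ 3 = id"
    then have "T x = x" for x using F3[of x Inf Inf] by simp
    then show False using Tnid by (auto simp: fun_eq_iff)
  qed
  obtain \<omega> \<mu> where om: "\<omega> ^ 3 = 1" "\<omega> \<noteq> 1" and mu: "is_mobius \<mu>" and conj: "\<forall>x. \<mu> (T x) = mob \<omega> 0 0 1 (\<mu> x)"
    using order3_conj[OF Tm Tnid T3] by blast
  define H0 where "H0 = (\<lambda>p. (\<mu> (fst p), (\<mu> \<circ> m0) (fst (snd p)), (\<mu> \<circ> m0 \<circ> m2) (snd (snd p))))"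
  define sw where "sw = (\<lambda>p::P1cube. (fst p, snd (snd p), fst (snd p)))"
  define H where "H = H0 \<circ> sw"
  have mm: "is_mobius (\<mu> \<circ> m0)" "is_mobius (\<mu> \<circ> m0 \<circ> m2)" using mu m by (auto intro!: is_mobius_comp)
  have "bij H0" unfolding H0_def using mu mm by (intro bij_triple mobius_bij)
  moreover have "bij sw" unfolding sw_def by (rule o_bij[where g="\<lambda>p::P1cube. (fst p, snd (snd p), fst (snd p))"]) (auto simp: fun_eq_iff)
  ultimately have bijH: "bij H" unfolding H_def by (rule bij_comp[rotated])
  have autH: "is_aut H"
  proof -
    have A: "\<forall>p. H p = (\<mu> (coord p (transpose 1 2 0)), (\<mu> \<circ> m0) (coord p (transpose 1 2 1)),
                     (\<mu> \<circ> m0 \<circ> m2) (coord p (transpose 1 2 2)))"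
      by (simp add: H_def H0_def sw_def coord_def transpose_def)
    have P: "transpose (1::nat) 2 permutes {0,1,2}" by (rule permutes_swap_id) auto
    have "aut_with_perm H (transpose 1 2)" unfolding aut_with_perm_def
      apply (rule conjI, rule P)
      apply (rule exI[of _ \<mu>], rule exI[of _ "\<mu> \<circ> m0"], rule exI[of _ "\<mu> \<circ> m0 \<circ> m2"])
      by (intro conjI mu mm A)
    then show ?thesis unfolding is_aut_def by blast
  qed
  have eqH: "\<forall>p. H (F p) = model_map \<omega> (H p)"
  proof
    fix p :: P1cube
    obtain x y z where p: "p = (x, y, z)" by (cases p) auto
    have "\<mu> (m0 (m2 (m1 x))) = mob \<omega> 0 0 1 (\<mu> x)" using conj by (simp add: T_def)
    then show "H (F p) = model_map \<omega> (H p)" by (simp add: p F H_def H0_def sw_def model_map_def)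
  qed
  show ?thesis
    apply (rule conjI[OF F3nid])
    apply (rule exI[of _ \<omega>], rule exI[of _ H])
    by (intro conjI om autH bijH eqH)
qed

lemma dvd9: "(d::nat) dvd 9 \<Longrightarrow> \<not> d dvd 3 \<Longrightarrow> d = 9"
proof -
  assume a: "d dvd 9" "\<not> d dvd 3"
  have "d \<le> 9" using a(1) by (rule dvd_imp_le) simp
  then have "d \<in> {0,1,2,3,4,5,6,7,8,9}" by auto
  then show "d = 9" using a by auto
qed

lemma c9: "f ^^ 9 = f \<circ> f \<circ> f \<circ> f \<circ> f \<circ> f \<circ> f \<circ> f \<circ> f"
  by (simp add: numeral_eq_Suc fun_eq_iff)

lemma perm_cases:
  assumes p: "\<sigma> permutes {0::nat,1,2}" and n: "\<sigma> \<noteq> id"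
    and k: "\<And>i. i \<in> {0,1,2} \<Longrightarrow> (\<sigma> ^^ 9) i = i"
  shows "(\<sigma> 0 = 1 \<and> \<sigma> 1 = 2 \<and> \<sigma> 2 = 0) \<or> (\<sigma> 0 = 2 \<and> \<sigma> 1 = 0 \<and> \<sigma> 2 = 1)"
proof -
  have out: "\<sigma> j = j" if "j \<notin> {0,1,2}" for j using permutes_not_in[OF p that] .
  have idc: "\<not> (\<sigma> 0 = 0 \<and> \<sigma> 1 = 1 \<and> \<sigma> 2 = 2)"
  proof
    assume h: "\<sigma> 0 = 0 \<and> \<sigma> 1 = 1 \<and> \<sigma> 2 = 2"
    have "\<sigma> j = j" for j
    proof (cases "j \<in> {0,1,2}")
      case True then show ?thesis using h by auto
    next
      case False then show ?thesis using out by blast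
    qed
    then show False using n by (auto simp: fun_eq_iff)
  qed
  have inj: "inj \<sigma>" using permutes_inj[OF p] .
  have r: "\<sigma> i \<in> {0,1,2}" if "i \<in> {0,1,2}" for i using permutes_in_image[OF p] that by simp
  have k0: "\<sigma> (\<sigma> (\<sigma> (\<sigma> (\<sigma> (\<sigma> (\<sigma> (\<sigma> (\<sigma> 0)))))))) = 0" using k[of 0] by (simp add: c9)
  have k1: "\<sigma> (\<sigma> (\<sigma> (\<sigma> (\<sigma> (\<sigma> (\<sigma> (\<sigma> (\<sigma> 1)))))))) = 1" using k[of 1] by (simp add: c9)
  have k2: "\<sigma> (\<sigma> (\<sigma> (\<sigma> (\<sigma> (\<sigma> (\<sigma> (\<sigma> (\<sigma> 2)))))))) = 2" using k[of 2] by (simp add: c9)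
  have d01: "\<sigma> 0 \<noteq> \<sigma> 1" "\<sigma> 0 \<noteq> \<sigma> 2" "\<sigma> 1 \<noteq> \<sigma> 2" by (simp_all add: inj_eq[OF inj])
  have "\<sigma> 0 = 0 \<or> \<sigma> 0 = 1 \<or> \<sigma> 0 = 2" using r[of 0] by auto
  moreover have "\<sigma> 1 = 0 \<or> \<sigma> 1 = 1 \<or> \<sigma> 1 = 2" using r[of 1] by auto
  moreover have "\<sigma> 2 = 0 \<or> \<sigma> 2 = 1 \<or> \<sigma> 2 = 2" using r[of 2] by auto
  ultimately show ?thesis using k0 k1 k2 d01 idc by (elim disjE) simp_all
qed

lemma pow_mod9:
  assumes G: "group G" and g: "g \<in> carrier G" and g9: "g [^]\<^bsub>G\<^esub> (9::nat) = \<one>\<^bsub>G\<^esub>"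
  shows "g [^]\<^bsub>G\<^esub> (n mod 9) = g [^]\<^bsub>G\<^esub> (n::nat)"
proof -
  interpret group G by (rule G)
  have "g [^]\<^bsub>G\<^esub> n = g [^]\<^bsub>G\<^esub> (9 * (n div 9) + n mod 9)" by simp
  also have "\<dots> = g [^]\<^bsub>G\<^esub> (9 * (n div 9)) \<otimes>\<^bsub>G\<^esub> g [^]\<^bsub>G\<^esub> (n mod 9)"
    using g by (rule nat_pow_mult[symmetric])
  also have "g [^]\<^bsub>G\<^esub> (9 * (n div 9)) = (g [^]\<^bsub>G\<^esub> (9::nat)) [^]\<^bsub>G\<^esub> (n div 9)"
    using g by (rule nat_pow_pow[symmetric])
  also have "\<dots> = \<one>\<^bsub>G\<^esub>" using g9 by simp
  also have "\<one>\<^bsub>G\<^esub> \<otimes>\<^bsub>G\<^esub> g [^]\<^bsub>G\<^esub> (n mod 9) = g [^]\<^bsub>G\<^esub> (n mod 9)" using g by simp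
  finally show ?thesis by simp
qed

theorem lemma5p6:
  fixes G :: "('g, 'b) monoid_scheme" and \<phi> :: "'g \<Rightarrow> P1cube \<Rightarrow> P1cube"
  assumes "group G" and "finite (carrier G)" and "order G = 9"
    and "aut_action G \<phi>"
    and "free_outside_finite G \<phi>"
    and "permutes_factors_nontrivially G \<phi>"
  shows "G \<cong> integer_mod_group 9 \<and>
    (\<exists>g\<in>carrier G. generate G {g} = carrier G \<and>
      (\<exists>\<omega> H. \<omega> ^ 3 = 1 \<and> \<omega> \<noteq> 1 \<and> is_aut H \<and> bij H \<and>
         (\<forall>p. H (\<phi> g p) = model_map \<omega> (H p))))"
proof -
  interpret G: group G by (rule assms(1))
  obtain g \<sigma> where g: "g \<in> carrier G" and ap: "aut_with_perm (\<phi> g) \<sigma>" and sn: "\<sigma> \<noteq> id"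
    using assms(6) unfolding permutes_factors_nontrivially_def by blast
  define F where "F = \<phi> g"
  have phi1: "\<phi> \<one>\<^bsub>G\<^esub> = id" using assms(4) unfolding aut_action_def by blast
  have phim: "\<phi> (x \<otimes>\<^bsub>G\<^esub> y) = \<phi> x \<circ> \<phi> y" if "x \<in> carrier G" "y \<in> carrier G" for x y
    using assms(4) that unfolding aut_action_def by blast
  have pw: "\<phi> (g [^]\<^bsub>G\<^esub> n) = F ^^ n" for n :: nat
  proof (induction n)
    case 0 then show ?case using phi1 by simp
  next
    case (Suc n)
    have "\<phi> (g [^]\<^bsub>G\<^esub> Suc n) = \<phi> (g [^]\<^bsub>G\<^esub> n) \<circ> \<phi> g" using g by (simp add: phim)
    then show ?case using Suc by (simp add: F_def funpow_Suc_right del: funpow.simps)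
  qed
  have g9: "g [^]\<^bsub>G\<^esub> (9::nat) = \<one>\<^bsub>G\<^esub>" using G.pow_order_eq_1[OF g] assms(3) by simp
  have F9: "F ^^ 9 = id" using pw[of 9] g9 phi1 by simp
  have p: "\<sigma> permutes {0,1,2}" using ap unfolding aut_with_perm_def by blast
  obtain m0 m1 m2 where m: "is_mobius m0" "is_mobius m1" "is_mobius m2"
    and Fm: "\<forall>p. F p = (m0 (coord p (\<sigma> 0)), m1 (coord p (\<sigma> 1)), m2 (coord p (\<sigma> 2)))"
    using ap unfolding aut_with_perm_def F_def by blast
  have sh: "shp F \<sigma>" using shp_of_aut ap unfolding F_def by blast
  have sh9: "shp (F ^^ 9) (\<sigma> ^^ 9)" by (rule shp_pow[OF sh])
  have k: "(\<sigma> ^^ 9) i = i" if "i \<in> {0,1,2}" for i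
  proof (rule ccontr)
    assume "(\<sigma> ^^ 9) i \<noteq> i"
    then have "F ^^ 9 \<noteq> id" using shp_nonid[OF sh9 that] by blast
    then show False using F9 by simp
  qed
  have cyc: "(\<sigma> 0 = 1 \<and> \<sigma> 1 = 2 \<and> \<sigma> 2 = 0) \<or> (\<sigma> 0 = 2 \<and> \<sigma> 1 = 0 \<and> \<sigma> 2 = 1)"
    by (rule perm_cases[OF p sn k])
  have "\<sigma> 0 \<noteq> 0" using cyc by auto
  then have Fnid: "F \<noteq> id" using shp_nonid[OF sh, of 0] by simp
  have gn1: "g \<noteq> \<one>\<^bsub>G\<^esub>" using Fnid phi1 unfolding F_def by auto
  have fin: "finite {p. F p = p}"
  proof (rule finite_subset[OF _ assms(5)[unfolded free_outside_finite_def]])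
    show "{p. F p = p} \<subseteq> {p. \<exists>g\<in>carrier G. g \<noteq> \<one>\<^bsub>G\<^esub> \<and> \<phi> g p = p}"
      using g gn1 unfolding F_def by blast
  qed
  have main: "F ^^ 3 \<noteq> id \<and> (\<exists>\<omega> H. \<omega> ^ 3 = 1 \<and> \<omega> \<noteq> 1 \<and> is_aut H \<and> bij H \<and>
           (\<forall>p. H (F p) = model_map \<omega> (H p)))"
    using cyc
  proof (elim disjE)
    assume c: "\<sigma> 0 = 1 \<and> \<sigma> 1 = 2 \<and> \<sigma> 2 = 0"
    have "F (x, y, z) = (m0 y, m1 z, m2 x)" for x y z using Fm c by (simp add: coord_def)
    then show ?thesis using cycleA[OF m _ fin F9] by blast
  next
    assume c: "\<sigma> 0 = 2 \<and> \<sigma> 1 = 0 \<and> \<sigma> 2 = 1"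
    have "F (x, y, z) = (m0 z, m1 x, m2 y)" for x y z using Fm c by (simp add: coord_def)
    then show ?thesis using cycleB[OF m _ fin F9] by blast
  qed
  have g3: "g [^]\<^bsub>G\<^esub> (3::nat) \<noteq> \<one>\<^bsub>G\<^esub>" using main pw[of 3] phi1 by auto
  have ordg: "G.ord g = 9"
  proof (rule dvd9)
    show "G.ord g dvd 9" using g9 G.pow_eq_id[OF g] by blast
    show "\<not> G.ord g dvd 3" using g3 G.pow_eq_id[OF g] by blast
  qed
  have cardG: "card (carrier G) = 9" using assms(3) unfolding order_def .
  have gen: "generate G {g} = carrier G"
  proof (rule card_subset_eq[OF assms(2)])
    show "generate G {g} \<subseteq> carrier G" using g by (intro G.generate_incl) simp
    show "card (generate G {g}) = card (carrier G)" using G.generate_pow_card[OF g] ordg cardG by simp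
  qed
  define h where "h = (\<lambda>k::int. g [^]\<^bsub>G\<^esub> (nat k))"
  have cZ: "carrier (integer_mod_group 9) = {0..<9}" by (simp add: carrier_integer_mod_group)
  have hom: "h \<in> hom (integer_mod_group 9) G"
  proof (rule homI)
    fix x assume "x \<in> carrier (integer_mod_group 9)"
    then show "h x \<in> carrier G" unfolding h_def using g by simp
  next
    fix x y assume x: "x \<in> carrier (integer_mod_group 9)" and y: "y \<in> carrier (integer_mod_group 9)"
    then have x0: "0 \<le> x" and y0: "0 \<le> y" using cZ by auto
    have "nat ((x + y) mod 9) = (nat x + nat y) mod 9" using x0 y0 by (simp add: nat_mod_distrib nat_add_distrib)
    then have "h (x \<otimes>\<^bsub>integer_mod_group 9\<^esub> y) = g [^]\<^bsub>G\<^esub> ((nat x + nat y) mod 9)" unfolding h_def by simp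
    also have "\<dots> = g [^]\<^bsub>G\<^esub> (nat x + nat y)" using pow_mod9[OF assms(1) g g9] .
    also have "\<dots> = h x \<otimes>\<^bsub>G\<^esub> h y" unfolding h_def using g by (simp add: G.nat_pow_mult)
    finally show "h (x \<otimes>\<^bsub>integer_mod_group 9\<^esub> y) = h x \<otimes>\<^bsub>G\<^esub> h y" .
  qed
  have injh: "inj_on h {0..<9}"
  proof (rule inj_onI)
    fix x y :: int assume x: "x \<in> {0..<9}" and y: "y \<in> {0..<9}" and e: "h x = h y"
    have "nat x \<in> {0..G.ord g - 1}" "nat y \<in> {0..G.ord g - 1}" using x y ordg by auto
    moreover have "g [^]\<^bsub>G\<^esub> nat x = g [^]\<^bsub>G\<^esub> nat y" using e unfolding h_def .
    ultimately have "nat x = nat y" using G.ord_inj[OF g] by (simp add: inj_on_def)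
    then show "x = y" using x y eq_nat_nat_iff by auto
  qed
  have imh: "h ` {0..<9} = carrier G"
  proof (rule card_subset_eq[OF assms(2)])
    show "h ` {0..<9} \<subseteq> carrier G" unfolding h_def using g by auto
    show "card (h ` {0..<9}) = card (carrier G)" using card_image[OF injh] cardG by simp
  qed
  have "h \<in> iso (integer_mod_group 9) G"
    by (rule isoI[OF hom]) (simp add: cZ bij_betw_def injh imh)
  then have "integer_mod_group 9 \<cong> G" by (rule is_isoI)
  then have iso: "G \<cong> integer_mod_group 9" using group.iso_sym[OF group_integer_mod_group] by blast
  obtain \<omega> H where "\<omega> ^ 3 = 1 \<and> \<omega> \<noteq> 1 \<and> is_aut H \<and> bij H \<and> (\<forall>p. H (F p) = model_map \<omega> (H p))"
    using main by blast
  then have "\<exists>\<omega> H. \<omega> ^ 3 = 1 \<and> \<omega> \<noteq> 1 \<and> is_aut H \<and> bij H \<and> (\<forall>p. H (\<phi> g p) = model_map \<omega> (H p))"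
    unfolding F_def by blast
  then show ?thesis using iso gen g by blast
qed

end
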